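(* Let $k\in\mathbb{Z}$. For every integer $n\ge 1$, $$2\sum_{m=1}^{n}\frac{1}{m^{k-1}}S_{1}(n,m)=G_{n}^{(k)}(1)+G_{n}^{(k)}.$$
   Context: For $k\in\mathbb{Z}$, the polyexponential function of index $k$ is $\mathrm{Ei}_k(x)=\sum_{n=1}^{\infty}\frac{x^n}{n^k(n-1)!}$. The poly-Genocchi polynomials $G_n^{(k)}(x)$ of index $k$ are defined by the generating function $\frac{2\,\mathrm{Ei}_k(\log(1+t))}{e^t+1}e^{xt}=\sum_{n=0}^{\infty}G_n^{(k)}(x)\frac{t^n}{n!}$, and $G_n^{(k)}=G_n^{(k)}(0)$. $S_1(n,m)$ denotes the (signed) Stirling numbers of the first kind, defined by $\frac{(\log(1+t))^m}{m!}=\sum_{n=m}^{\infty}S_1(n,m)\frac{t^n}{n!}$ (equivalently $x(x-1)\cdots(x-n+1)=\sum_{m=0}^{n}S_1(n,m)x^m$). *)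

theory Defs
  imports "HOL-Computational_Algebra.Formal_Power_Series" "HOL-Combinatorics.Stirling"
begin

definition polyexp_fps :: "int \<Rightarrow> real fps" where
  "polyexp_fps k = Abs_fps (\<lambda>n. if n = 0 then 0
      else 1 / ((real n) powi k * fact (n - 1)))"

definition poly_genocchi_gf :: "int \<Rightarrow> real \<Rightarrow> real fps" where
  "poly_genocchi_gf k x =
     fps_const 2 * (polyexp_fps k oo fps_ln 1) / (fps_exp 1 + 1) * fps_exp x"

definition poly_genocchi_poly :: "int \<Rightarrow> nat \<Rightarrow> real \<Rightarrow> real" where
  "poly_genocchi_poly k n x = fact n * fps_nth (poly_genocchi_gf k x) n"

definition poly_genocchi :: "int \<Rightarrow> nat \<Rightarrow> real" where
  "poly_genocchi k n = poly_genocchi_poly k n 0"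

text \<open>Signed Stirling numbers of the first kind; the library's stirling is unsigned.\<close>
definition Stirling1 :: "nat \<Rightarrow> nat \<Rightarrow> int" where
  "Stirling1 n m = (-1) ^ (n - m) * int (stirling n m)"

end

theory Submission
  imports Defs
begin

unbundle fps_syntax

definition Sr :: "nat \<Rightarrow> nat \<Rightarrow> real" where
  "Sr n m = (-1) ^ (n - m) * real (stirling n m)"

lemma Sr_eq: "real_of_int (Stirling1 n m) = Sr n m"
  by (simp add: Sr_def Stirling1_def)

lemma Sr_0: "Sr 0 m = (if m = 0 then 1 else 0)"
  by (cases m) (simp_all add: Sr_def)

lemma Sr_Suc0: "Sr (Suc n) 0 = 0"
  by (simp add: Sr_def)

lemma Sr_rec: "Sr (Suc n) (Suc m) = Sr n m - real n * Sr n (Suc m)"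
proof (cases "m < n")
  case True
  then have a: "n - m = Suc (n - Suc m)" by simp
  show ?thesis by (simp add: Sr_def a algebra_simps)
next
  case False
  then show ?thesis
  proof (cases "m = n")
    case True thus ?thesis by (simp add: Sr_def)
  next
    case False
    with \<open>\<not> m < n\<close> have "n < m" by simp
    thus ?thesis by (simp add: Sr_def)
  qed
qed


abbreviation L :: "real fps" where "L \<equiv> fps_ln 1"

lemma deriv_eq: "(1 + fps_X) * fps_deriv (L ^ Suc m) = of_nat (Suc m) * L ^ m"
proof -
  have d: "fps_deriv (L ^ Suc m) = of_nat (Suc m) * inverse (1 + fps_X) * L ^ m"
    by (simp only: fps_deriv_power' diff_Suc_1) (simp add: fps_ln_deriv)
  have "(1 + fps_X) * fps_deriv (L ^ Suc m)
      = of_nat (Suc m) * L ^ m * ((1 + fps_X) * inverse (1 + fps_X))"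
    by (simp only: d) (simp only: mult_ac)
  also have "(1 + fps_X) * inverse (1 + fps_X :: real fps) = 1"
    by (rule inverse_mult_eq_1') simp
  finally show ?thesis by simp
qed

lemma coeff_rec:
  "real (Suc n) * (L ^ Suc m) $ Suc n = real (Suc m) * (L ^ m) $ n - real n * (L ^ Suc m) $ n"
proof -
  have "((1 + fps_X) * fps_deriv (L ^ Suc m)) $ n = (of_nat (Suc m) * L ^ m) $ n"
    by (simp only: deriv_eq)
  moreover have "((1 + fps_X) * fps_deriv (L ^ Suc m)) $ n
      = real (Suc n) * (L ^ Suc m) $ Suc n + real n * (L ^ Suc m) $ n"
    by (cases n) (simp_all add: fps_mult_fps_X_plus_1_nth del: power_Suc)
  moreover have "(of_nat (Suc m) * L ^ m) $ n = real (Suc m) * (L ^ m) $ n"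
    by (metis fps_mult_left_const_nth fps_of_nat)
  ultimately show ?thesis by linarith
qed

lemma coeff_L_power: "(L ^ m) $ n * fact n = fact m * Sr n m"
proof (induction n arbitrary: m)
  case 0
  then show ?case by (cases m) (simp_all add: fps_power_zeroth Sr_0)
next
  case (Suc n)
  show ?case
  proof (cases m)
    case 0
    then show ?thesis by (simp add: Sr_Suc0)
  next
    case (Suc j)
    have "(L ^ Suc j) $ Suc n * fact (Suc n)
        = (real (Suc n) * (L ^ Suc j) $ Suc n) * fact n"
      by (simp add: algebra_simps)
    also have "\<dots> = real (Suc j) * ((L ^ j) $ n * fact n) - real n * ((L ^ Suc j) $ n * fact n)"
      by (simp only: coeff_rec) (simp add: algebra_simps)
    also have "\<dots> = real (Suc j) * (fact j * Sr n j) - real n * (fact (Suc j) * Sr n (Suc j))"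
      by (simp only: Suc.IH)
    also have "\<dots> = fact (Suc j) * Sr (Suc n) (Suc j)"
      by (simp add: Sr_rec algebra_simps)
    finally show ?thesis using Suc by simp
  qed
qed

theorem theorem1:
  fixes k :: int and n :: nat
  assumes "n \<ge> 1"
  shows "2 * (\<Sum>m=1..n. real_of_int (Stirling1 n m) / (real m) powi (k - 1))
           = poly_genocchi_poly k n 1 + poly_genocchi k n"
proof -
  define C where "C = fps_const (2::real) * (polyexp_fps k oo L)"
  define B where "B = fps_exp (1::real) + 1"
  have B0: "B $ 0 \<noteq> 0" by (simp add: B_def)
  have "poly_genocchi_gf k 1 + poly_genocchi_gf k 0 = C * inverse B * B"
    unfolding poly_genocchi_gf_def C_def B_def
    by (simp add: fps_divide_unit algebra_simps)
  also have "\<dots> = C" using inverse_mult_eq_1[OF B0] by (simp add: mult.assoc)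
  finally have gf: "poly_genocchi_gf k 1 + poly_genocchi_gf k 0 = C" .
  have "poly_genocchi_poly k n 1 + poly_genocchi k n = fact n * C $ n"
    unfolding poly_genocchi_def poly_genocchi_poly_def gf[symmetric]
    by (simp add: algebra_simps)
  also have "\<dots> = 2 * (\<Sum>i=0..n. polyexp_fps k $ i * ((L ^ i) $ n * fact n))"
    by (simp add: C_def fps_compose_nth sum_distrib_left sum_distrib_right algebra_simps)
  also have "\<dots> = 2 * (\<Sum>i=0..n. polyexp_fps k $ i * (fact i * Sr n i))"
    by (simp only: coeff_L_power)
  also have "(\<Sum>i=0..n. polyexp_fps k $ i * (fact i * Sr n i))
      = (\<Sum>i=1..n. polyexp_fps k $ i * (fact i * Sr n i))"
    by (rule sum.mono_neutral_right) (auto simp: polyexp_fps_def)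
  also have "\<dots> = (\<Sum>m=1..n. real_of_int (Stirling1 n m) / (real m) powi (k - 1))"
  proof (rule sum.cong[OF refl])
    fix i assume i: "i \<in> {1..n}"
    then obtain j where j: "i = Suc j" by (cases i) auto
    define p where "p = real i powi (k - 1)"
    have pk: "real i powi k = p * real i"
      unfolding p_def using power_int_minus_mult[of "real i" k] i by simp
    have p0: "p \<noteq> 0" unfolding p_def using i by simp
    have fi: "fact i = real i * fact (i - 1)" using j by simp
    have "polyexp_fps k $ i * (fact i * Sr n i) = Sr n i / p"
      using i p0 by (simp add: polyexp_fps_def pk fi field_simps)
    then show "polyexp_fps k $ i * (fact i * Sr n i)
        = real_of_int (Stirling1 n i) / (real i) powi (k - 1)"
      by (simp add: Sr_eq p_def)
  qed
  finally show ?thesis by simp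
qed

end
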